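(* Let $(d_1,d_2)\in\mathbb N^2$ and $(p,q)\in\mathbb N^2\setminus\{(0,0)\}$. Then (1) $\mathrm{CG}^0_+(p,q)=\varnothing$ if $qd_1\le pd_2$; (2) $\mathrm{CG}^0_-(p,q)=\varnothing$ if $qd_1\ge pd_2$.
   Context: Dyck paths and gradings: for $d_1,d_2\ge0$, $\mathcal P=\mathcal P(d_1,d_2)$ is the highest lattice path of unit east (horizontal) and north (vertical) edges from $(0,0)$ to $(d_1,d_2)$ never passing strictly above the segment joining them; $\mathcal P_{\mathbf E},\mathcal P_{\mathbf N}$ its horizontal/vertical edge sets; for a set $C$ of edges $C_{\mathbf E},C_{\mathbf N}$, $|C|$ as usual; $\overrightarrow{ef}$ is the set of edges from $e$ to $f$ along the path inclusive, continuing cyclically from the last edge to the first if $f$ comes before $e$. A grading is a map $\omega$ from edges to $\mathbb N$, $\omega(C)=\sum_{e\in C}\omega(e)$; it is compatible if for all $u\in\mathcal P_{\mathbf E},v\in\mathcal P_{\mathbf N}$ with $\omega(u)\omega(v)>0$ some $e\in\overrightarrow{uv}$ satisfies either $e\in\mathcal P_{\mathbf N}\setminus\{v\}$ and $|(\overrightarrow{ue})_{\mathbf N}|=\omega((\overrightarrow{ue})_{\mathbf E})$, or $e\in\mathcal P_{\mathbf E}\setminus\{u\}$ and $|(\overrightarrow{ev})_{\mathbf E}|=\omega((\overrightarrow{ev})_{\mathbf N})$. Shadows: $\operatorname{sh}(e)=\emptyset$ if $\omega(e)=0$; for horizontal $e$, $\operatorname{sh}(e)=(\overrightarrow{ev})_{\mathbf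 N}$ where $v$ is vertical with $|(\overrightarrow{ev})_{\mathbf N}|=\omega((\overrightarrow{ev})_{\mathbf E})$ and $\overrightarrow{ev}$ shortest, or $\mathcal P_{\mathbf N}$ if no such $v$; for vertical $e$, $\operatorname{sh}(e)=(\overrightarrow{ue})_{\mathbf E}$ where $u$ is horizontal with $|(\overrightarrow{ue})_{\mathbf E}|=\omega((\overrightarrow{ue})_{\mathbf N})$ and $\overrightarrow{ue}$ shortest, or $\mathcal P_{\mathbf E}$ if none; $\operatorname{sh}(C)=\bigcup_{e\in C}\operatorname{sh}(e)$. Let $\mathrm{CG}^0_+(p,q)$ be the set of compatible gradings $\omega$ on $\mathcal P(d_1,d_2)$ with $\omega(\mathcal P_{\mathbf N})=p$, $\omega(\mathcal P_{\mathbf E})=q$ and $\omega(\mathcal P_{\mathbf N}\setminus\operatorname{sh}(\mathcal P_{\mathbf E}))=0$, and $\mathrm{CG}^0_-(p,q)$ the set of those with $\omega(\mathcal P_{\mathbf N})=p$, $\omega(\mathcal P_{\mathbf E})=q$ and $\omega(\mathcal P_{\mathbf E}\setminus\operatorname{sh}(\mathcal P_{\mathbf N}))=0$. *)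

theory Defs
  imports Main
begin

text \<open>The highest lattice path P(d1,d2) from (0,0) to (d1,d2) weakly below the segment,
  built greedily: edges are indexed 0..<d1+d2 in path order; from the current point (x,y)
  the path goes north whenever the new point stays weakly below the segment
  (i.e. (y+1)*d1 \<le> x*d2) and y < d2, otherwise east.\<close>

fun dpos :: "nat \<Rightarrow> nat \<Rightarrow> nat \<Rightarrow> nat \<times> nat" where
  "dpos d1 d2 0 = (0, 0)"
| "dpos d1 d2 (Suc i) =
     (let (x, y) = dpos d1 d2 i in
      if y < d2 \<and> (y + 1) * d1 \<le> x * d2 then (x, y + 1) else (x + 1, y))"

definition isN :: "nat \<Rightarrow> nat \<Rightarrow> nat \<Rightarrow> bool" where
  "isN d1 d2 i = (let (x, y) = dpos d1 d2 i in y < d2 \<and> (y + 1) * d1 \<le> x * d2)"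

definition edgesN :: "nat \<Rightarrow> nat \<Rightarrow> nat set" where
  "edgesN d1 d2 = {i. i < d1 + d2 \<and> isN d1 d2 i}"

definition edgesE :: "nat \<Rightarrow> nat \<Rightarrow> nat set" where
  "edgesE d1 d2 = {i. i < d1 + d2 \<and> \<not> isN d1 d2 i}"

definition arc :: "nat \<Rightarrow> nat \<Rightarrow> nat \<Rightarrow> nat \<Rightarrow> nat set" where
  "arc d1 d2 e f = (if e \<le> f then {e..f} else {e..<d1 + d2} \<union> {0..f})"

definition grading :: "nat \<Rightarrow> nat \<Rightarrow> (nat \<Rightarrow> nat) \<Rightarrow> bool" where
  "grading d1 d2 w = (\<forall>i. d1 + d2 \<le> i \<longrightarrow> w i = 0)"

definition compatible :: "nat \<Rightarrow> nat \<Rightarrow> (nat \<Rightarrow> nat) \<Rightarrow> bool" where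
  "compatible d1 d2 w = (\<forall>u \<in> edgesE d1 d2. \<forall>v \<in> edgesN d1 d2. w u * w v > 0 \<longrightarrow>
     (\<exists>e \<in> arc d1 d2 u v.
        (e \<in> edgesN d1 d2 - {v} \<and>
           card (arc d1 d2 u e \<inter> edgesN d1 d2) = sum w (arc d1 d2 u e \<inter> edgesE d1 d2))
      \<or> (e \<in> edgesE d1 d2 - {u} \<and>
           card (arc d1 d2 e v \<inter> edgesE d1 d2) = sum w (arc d1 d2 e v \<inter> edgesN d1 d2))))"

definition shadow :: "nat \<Rightarrow> nat \<Rightarrow> (nat \<Rightarrow> nat) \<Rightarrow> nat \<Rightarrow> nat set" where
  "shadow d1 d2 w e =
    (if w e = 0 then {}
     else if e \<in> edgesE d1 d2 then
       (let P = (\<lambda>v. v \<in> edgesN d1 d2 \<and>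
                   card (arc d1 d2 e v \<inter> edgesN d1 d2) = sum w (arc d1 d2 e v \<inter> edgesE d1 d2))
        in if \<exists>v. P v
           then arc d1 d2 e (arg_min (\<lambda>v. card (arc d1 d2 e v)) P) \<inter> edgesN d1 d2
           else edgesN d1 d2)
     else
       (let P = (\<lambda>u. u \<in> edgesE d1 d2 \<and>
                   card (arc d1 d2 u e \<inter> edgesE d1 d2) = sum w (arc d1 d2 u e \<inter> edgesN d1 d2))
        in if \<exists>u. P u
           then arc d1 d2 (arg_min (\<lambda>u. card (arc d1 d2 u e)) P) e \<inter> edgesE d1 d2
           else edgesE d1 d2))"

definition shadowSet :: "nat \<Rightarrow> nat \<Rightarrow> (nat \<Rightarrow> nat) \<Rightarrow> nat set \<Rightarrow> nat set" where
  "shadowSet d1 d2 w C = (\<Union>e \<in> C. shadow d1 d2 w e)"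

definition CG0plus :: "nat \<Rightarrow> nat \<Rightarrow> nat \<Rightarrow> nat \<Rightarrow> (nat \<Rightarrow> nat) set" where
  "CG0plus d1 d2 p q = {w. grading d1 d2 w \<and> compatible d1 d2 w \<and>
     sum w (edgesN d1 d2) = p \<and> sum w (edgesE d1 d2) = q \<and>
     sum w (edgesN d1 d2 - shadowSet d1 d2 w (edgesE d1 d2)) = 0}"

definition CG0minus :: "nat \<Rightarrow> nat \<Rightarrow> nat \<Rightarrow> nat \<Rightarrow> (nat \<Rightarrow> nat) set" where
  "CG0minus d1 d2 p q = {w. grading d1 d2 w \<and> compatible d1 d2 w \<and>
     sum w (edgesN d1 d2) = p \<and> sum w (edgesE d1 d2) = q \<and>
     sum w (edgesE d1 d2 - shadowSet d1 d2 w (edgesN d1 d2)) = 0}"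

end

theory Submission
  imports Defs
begin


definition dst :: "nat \<Rightarrow> nat \<Rightarrow> nat \<Rightarrow> nat" where
  "dst n s f = (if s \<le> f then f - s else f + n - s)"

definition carc :: "nat \<Rightarrow> nat \<Rightarrow> nat \<Rightarrow> nat set" where
  "carc n s f = (\<lambda>i. (s + i) mod n) ` {..dst n s f}"

lemma mod_cancel_nat: "(x + d) mod (n::nat) = (z + d) mod n \<Longrightarrow> x mod n = z mod n"
  by (simp add: nat_mod_eq_iff)

lemma mod_cancel_left: "(d + x) mod (n::nat) = (d + z) mod n \<Longrightarrow> x mod n = z mod n"
  by (simp add: nat_mod_eq_iff)

lemma dst_lt: "s < n \<Longrightarrow> f < n \<Longrightarrow> dst n s f < n"
  by (auto simp: dst_def)

lemma pt_dst: "s < n \<Longrightarrow> f < n \<Longrightarrow> (s + dst n s f) mod n = f"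
  by (auto simp: dst_def le_mod_geq)

lemma dst_pt: assumes "s < n" "i < n" shows "dst n s ((s + i) mod n) = i"
proof (cases "s + i < n")
  case True then show ?thesis by (auto simp: dst_def)
next
  case False
  then have "(s + i) mod n = s + i - n" using assms by (simp add: le_mod_geq)
  then show ?thesis using False assms by (auto simp: dst_def)
qed

lemma inj_pt: "inj_on (\<lambda>i. (s + i) mod n) {..<n::nat}"
proof (rule inj_onI)
  fix i j assume "i \<in> {..<n}" "j \<in> {..<n}" and e: "(s + i) mod n = (s + j) mod n"
  have "i mod n = j mod n" using mod_cancel_left[OF e] .
  then show "i = j" using \<open>i \<in> {..<n}\<close> \<open>j \<in> {..<n}\<close> by simp
qed

lemma carc_mem: "s < n \<Longrightarrow> f < n \<Longrightarrow> x \<in> carc n s f \<longleftrightarrow> x < n \<and> dst n s x \<le> dst n s f"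
proof
  assume a: "s < n" "f < n" "x \<in> carc n s f"
  then obtain i where i: "i \<le> dst n s f" "x = (s+i) mod n" by (auto simp: carc_def)
  have "i < n" using i dst_lt[OF a(1,2)] by simp
  then show "x < n \<and> dst n s x \<le> dst n s f" using i a by (simp add: dst_pt)
next
  assume a: "s < n" "f < n" "x < n \<and> dst n s x \<le> dst n s f"
  then have "x = (s + dst n s x) mod n" by (simp add: pt_dst)
  then show "x \<in> carc n s f" using a unfolding carc_def by blast
qed

lemma card_carc: "s < n \<Longrightarrow> f < n \<Longrightarrow> card (carc n s f) = Suc (dst n s f)"
proof -
  assume a: "s < n" "f < n"
  have "inj_on (\<lambda>i. (s + i) mod n) {..dst n s f}"
    by (rule inj_on_subset[OF inj_pt]) (use dst_lt[OF a] in auto)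
  then show ?thesis by (simp add: carc_def card_image)
qed

lemma sum_carc: "s < n \<Longrightarrow> f < n \<Longrightarrow> sum g (carc n s f) = (\<Sum>i\<le>dst n s f. g ((s + i) mod n))"
proof -
  assume a: "s < n" "f < n"
  have "inj_on (\<lambda>i. (s + i) mod n) {..dst n s f}"
    by (rule inj_on_subset[OF inj_pt]) (use dst_lt[OF a] in auto)
  then show ?thesis by (simp add: carc_def sum.reindex)
qed


lemma arc_carc: "s < d1 + d2 \<Longrightarrow> f < d1 + d2 \<Longrightarrow> arc d1 d2 s f = carc (d1 + d2) s f"
proof -
  assume a: "s < d1 + d2" "f < d1 + d2"
  let ?n = "d1 + d2"
  show ?thesis
  proof (rule set_eqI)
    fix x
    show "x \<in> arc d1 d2 s f \<longleftrightarrow> x \<in> carc ?n s f"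
      using a by (subst carc_mem) (auto simp: arc_def dst_def)
  qed
qed

lemma dst_self: "dst n s s = 0" by (simp add: dst_def)

lemma dst_trans: "s < n \<Longrightarrow> e < n \<Longrightarrow> v < n \<Longrightarrow> y < n \<Longrightarrow> dst n s e \<le> dst n s v \<Longrightarrow> dst n e y \<le> dst n e v
  \<Longrightarrow> dst n s y = dst n s e + dst n e y"
  by (auto simp: dst_def split: if_splits)

lemma dst_end: "s < n \<Longrightarrow> e < n \<Longrightarrow> v < n \<Longrightarrow> dst n s e \<le> dst n s v \<Longrightarrow> dst n e v = dst n s v - dst n s e"
  by (auto simp: dst_def split: if_splits)



definition PS :: "nat \<Rightarrow> (nat \<Rightarrow> int) \<Rightarrow> nat \<Rightarrow> int" where
  "PS n f m = (\<Sum>j<m. f (j mod n))"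

lemma PS_add: "PS n f (m + k) = PS n f m + (\<Sum>i<k. f ((m + i) mod n))"
  by (induction k) (simp_all add: PS_def)

lemma PS_Suc: "PS n f (Suc m) = PS n f m + f (m mod n)"
  by (simp add: PS_def)

lemma PS_per: "PS n f (m + n) = PS n f m + PS n f n"
proof (induction m)
  case 0 then show ?case by (simp add: PS_def)
next
  case (Suc m)
  have "PS n f (Suc m + n) = PS n f (m + n) + f ((m + n) mod n)"
    using PS_Suc[of n f "m + n"] by simp
  also have "\<dots> = PS n f m + PS n f n + f (m mod n)" using Suc by simp
  finally show ?case by (simp add: PS_Suc)
qed

lemma PS_diff: "k \<le> M \<Longrightarrow> PS n f M - PS n f (M - k) = (\<Sum>i<k. f (((M - k) mod n + i) mod n))"
proof -
  assume "k \<le> M"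
  then have "PS n f M = PS n f (M - k + k)" by simp
  also have "\<dots> = PS n f (M - k) + (\<Sum>i<k. f ((M - k + i) mod n))" by (rule PS_add)
  finally show ?thesis by (simp add: mod_add_left_eq)
qed

lemma sum_carc_PS:
  assumes "0 < n" "s < n" "v < n" "n \<le> M" "(M - 1) mod n = v"
  shows "sum f (carc n s v) = PS n f M - PS n f (M - Suc (dst n s v))"
proof -
  let ?d = "dst n s v"
  have dl: "?d < n" using dst_lt assms by blast
  have "PS n f M - PS n f (M - Suc ?d) = (\<Sum>i<Suc ?d. f (((M - Suc ?d) mod n + i) mod n))"
    using PS_diff[of "Suc ?d" M n f] dl assms by simp
  moreover have "(M - Suc ?d) mod n = s"
  proof -
    have "((M - Suc ?d) mod n + ?d) mod n = (M - Suc ?d + ?d) mod n" by (simp add: mod_add_left_eq)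
    also have "M - Suc ?d + ?d = M - 1" using dl assms by simp
    also have "(M - 1) mod n = (s + ?d) mod n" using pt_dst assms by simp
    finally have "((M - Suc ?d) mod n + ?d) mod n = (s + ?d) mod n" .
    then have "(M - Suc ?d) mod n mod n = s mod n" by (rule mod_cancel_nat)
    then show ?thesis using assms by simp
  qed
  ultimately show ?thesis using sum_carc[OF assms(2,3), of f] lessThan_Suc_atMost by simp
qed

lemma CLpos:
  assumes n: "0 < n" and T: "PS n f n > 0"
  shows "\<exists>M\<ge>n. \<forall>k. 1 \<le> k \<and> k \<le> n \<longrightarrow> PS n f (M - k) < PS n f M"
proof -
  let ?S = "{n..<2*n}"
  define mx where "mx = Max (PS n f ` ?S)"
  have fin: "finite (PS n f ` ?S)" by simp
  have ne: "PS n f ` ?S \<noteq> {}" using n by auto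
  have "mx \<in> PS n f ` ?S" unfolding mx_def using fin ne by (rule Max_in)
  then have ex: "\<exists>m. m \<in> ?S \<and> PS n f m = mx" by auto
  define M where "M = (LEAST m. m \<in> ?S \<and> PS n f m = mx)"
  have M: "M \<in> ?S" "PS n f M = mx" using LeastI_ex[OF ex] unfolding M_def by auto
  have le: "\<And>m. m \<in> ?S \<Longrightarrow> PS n f m \<le> mx" unfolding mx_def using fin by auto
  have least: "\<And>m. m \<in> ?S \<Longrightarrow> PS n f m = mx \<Longrightarrow> M \<le> m" unfolding M_def by (rule Least_le) simp
  show ?thesis
  proof (intro exI[of _ M] conjI allI impI)
    show "n \<le> M" using M by simp
    fix k assume k: "1 \<le> k \<and> k \<le> n"
    show "PS n f (M - k) < PS n f M"
    proof (cases "n \<le> M - k")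
      case True
      then have "M - k \<in> ?S" using M k by auto
      moreover have "M - k < M" using k M by auto
      ultimately show ?thesis using le least M by force
    next
      case False
      then have "M - k + n \<in> ?S" using M k by auto
      then have "PS n f (M - k + n) \<le> mx" by (rule le)
      then show ?thesis using PS_per[of n f "M - k"] T M by simp
    qed
  qed
qed

lemma CLnonpos:
  assumes n: "0 < n" and T: "PS n f n \<le> 0"
  shows "\<exists>m. \<forall>k<n. PS n f (m + n) - PS n f (m + n - k) \<le> 0"
proof -
  let ?S = "{n..<2*n}"
  define mn where "mn = Min (PS n f ` ?S)"
  have fin: "finite (PS n f ` ?S)" by simp
  have ne: "PS n f ` ?S \<noteq> {}" using n by auto
  have "mn \<in> PS n f ` ?S" unfolding mn_def using fin ne by (rule Min_in)
  then obtain M where M: "M \<in> ?S" "PS n f M = mn" by auto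
  have ge: "\<And>m. m \<in> ?S \<Longrightarrow> mn \<le> PS n f m" unfolding mn_def using fin by auto
  show ?thesis
  proof (intro exI[of _ "M - n"] allI impI)
    fix k assume k: "k < n"
    have e: "M - n + n = M" using M by auto
    show "PS n f (M - n + n) - PS n f (M - n + n - k) \<le> 0"
    proof (cases "n \<le> M - k")
      case True
      then have "M - k \<in> ?S" using M k by auto
      then show ?thesis using ge M e by force
    next
      case False
      then have "M - k + n \<in> ?S" using M k by auto
      then have "mn \<le> PS n f (M - k + n)" by (rule ge)
      then show ?thesis using PS_per[of n f "M - k"] T M e by simp
    qed
  qed
qed

definition Dv :: "nat \<Rightarrow> (nat \<Rightarrow> int) \<Rightarrow> nat \<Rightarrow> int" where
  "Dv n f m = Max ((\<lambda>k. PS n f (m + n) - PS n f (m + n - k)) ` {..<n})"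

lemma D_ge: "k < n \<Longrightarrow> PS n f (m + n) - PS n f (m + n - k) \<le> Dv n f m"
  unfolding Dv_def by (rule Max_ge) auto

lemma D_ex: "0 < n \<Longrightarrow> \<exists>k<n. Dv n f m = PS n f (m + n) - PS n f (m + n - k)"
proof -
  assume n: "0 < n"
  have "Dv n f m \<in> (\<lambda>k. PS n f (m + n) - PS n f (m + n - k)) ` {..<n}"
    unfolding Dv_def by (rule Max_in) (use n in auto)
  then show ?thesis by auto
qed

lemma D_nonneg: "0 < n \<Longrightarrow> 0 \<le> Dv n f m"
  using D_ge[of 0 n f m] by simp

lemma D_per: "Dv n f (m + n) = Dv n f m"
proof -
  have "\<And>k. k < n \<Longrightarrow> PS n f (m + n + n) - PS n f (m + n + n - k) = PS n f (m + n) - PS n f (m + n - k)"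
  proof -
    fix k assume "k < n"
    then have "m + n + n - k = (m + n - k) + n" by simp
    then show "PS n f (m + n + n) - PS n f (m + n + n - k) = PS n f (m + n) - PS n f (m + n - k)"
      using PS_per[of n f "m + n"] PS_per[of n f "m + n - k"] by simp
  qed
  then show ?thesis unfolding Dv_def by (intro arg_cong[where f=Max] image_cong) auto
qed

lemma D_mult: "Dv n f (m + n * j) = Dv n f m"
proof (induction j)
  case 0 then show ?case by simp
next
  case (Suc j)
  have "Dv n f (m + n * Suc j) = Dv n f ((m + n * j) + n)" by (simp add: algebra_simps)
  also have "\<dots> = Dv n f (m + n * j)" by (rule D_per)
  finally show ?case using Suc by simp
qed

lemma D_mod: "Dv n f m = Dv n f (m mod n)"
  using D_mult[of n f "m mod n" "m div n"] by (simp add: mult.commute)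

lemma D_step_le:
  assumes n: "0 < n"
  shows "Dv n f (Suc m) \<le> max 0 (Dv n f m + f (m mod n))"
proof -
  obtain k where k: "k < n" "Dv n f (Suc m) = PS n f (Suc m + n) - PS n f (Suc m + n - k)"
    using D_ex[OF n] by blast
  show ?thesis
  proof (cases k)
    case 0 then show ?thesis using k by simp
  next
    case (Suc k')
    have "PS n f (Suc m + n) = PS n f (m + n) + f (m mod n)"
      using PS_Suc[of n f "m + n"] by simp
    moreover have "Suc m + n - k = m + n - k'" using Suc by simp
    moreover have "PS n f (m + n) - PS n f (m + n - k') \<le> Dv n f m"
      using D_ge Suc k by simp
    ultimately show ?thesis using k by simp
  qed
qed

lemma D_step_pos:
  assumes n: "0 < n" and T: "PS n f n \<le> 0" and D: "0 < Dv n f m" and fm: "0 \<le> f (m mod n)"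
  shows "0 < Dv n f (Suc m)"
proof -
  obtain k where k: "k < n" "Dv n f m = PS n f (m + n) - PS n f (m + n - k)"
    using D_ex[OF n] by blast
  have ps: "PS n f (Suc m + n) = PS n f (m + n) + f (m mod n)"
    using PS_Suc[of n f "m + n"] by simp
  show ?thesis
  proof (cases "Suc k < n")
    case True
    have "Suc m + n - Suc k = m + n - k" by simp
    then have "PS n f (Suc m + n) - PS n f (Suc m + n - Suc k) > 0" using ps k D fm by simp
    then show ?thesis using D_ge[OF True, of f "Suc m"] by simp
  next
    case False
    then have "m + n - k = Suc m" using k by simp
    then have "PS n f (m + n) > PS n f (Suc m)" using k D by simp
    moreover have "PS n f (Suc m + n) = PS n f (Suc m) + PS n f n" by (rule PS_per)
    ultimately show ?thesis using ps T fm by simp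
  qed
qed

lemma D_count:
  assumes n: "0 < n"
  shows "(\<Sum>m<n. Dv n f m) \<le> (\<Sum>m<n. max 0 (Dv n f m + f (m mod n)))"
proof -
  have "(\<Sum>m<n. Dv n f (Suc m) - Dv n f m) = Dv n f n - Dv n f 0" by (rule sum_lessThan_telescope)
  also have "Dv n f n = Dv n f 0" using D_per[of n f 0] by simp
  finally have "(\<Sum>m<n. Dv n f (Suc m)) = (\<Sum>m<n. Dv n f m)" by (simp add: sum_subtractf)
  moreover have "(\<Sum>m<n. Dv n f (Suc m)) \<le> (\<Sum>m<n. max 0 (Dv n f m + f (m mod n)))"
    by (rule sum_mono) (rule D_step_le[OF n])
  ultimately show ?thesis by simp
qed



locale core =
  fixes n :: nat and Nn :: "nat \<Rightarrow> bool" and w :: "nat \<Rightarrow> nat" and \<alpha> \<beta> :: nat and h :: "nat \<Rightarrow> int"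
  assumes n_pos: "0 < n"
  and cardN: "card {i. i < n \<and> Nn i} = \<beta>" and cardE: "card {i. i < n \<and> \<not> Nn i} = \<alpha>"
  and h0: "h 0 = 0" and hn: "h n = 0"
  and hstep: "\<And>m. m < n \<Longrightarrow> h (Suc m) = h m + (if Nn m then int \<alpha> else - int \<beta>)"
  and hbnd: "\<And>m. m \<le> n \<Longrightarrow> - int (\<alpha> + \<beta>) < h m \<and> h m \<le> 0"
  and H1: "\<And>v. v < n \<Longrightarrow> Nn v \<Longrightarrow> 0 < w v \<Longrightarrow> (\<exists>u0<n. \<not> Nn u0 \<and> 0 < w u0 \<and>
      (\<forall>x<n. Nn x \<and> x \<noteq> v \<and> x \<in> carc n u0 v \<longrightarrow>
          card (carc n u0 x \<inter> {i. i < n \<and> Nn i}) \<noteq> sum w (carc n u0 x \<inter> {i. i < n \<and> \<not> Nn i})))"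
  and H2: "\<And>u0 v. u0 < n \<Longrightarrow> v < n \<Longrightarrow> \<not> Nn u0 \<Longrightarrow> Nn v \<Longrightarrow> 0 < w u0 * w v \<Longrightarrow>
      (\<exists>e\<in>carc n u0 v.
         (Nn e \<and> e \<noteq> v \<and> card (carc n u0 e \<inter> {i. i < n \<and> Nn i}) = sum w (carc n u0 e \<inter> {i. i < n \<and> \<not> Nn i}))
       \<or> (\<not> Nn e \<and> e \<noteq> u0 \<and> card (carc n e v \<inter> {i. i < n \<and> \<not> Nn i}) = sum w (carc n e v \<inter> {i. i < n \<and> Nn i})))"
begin

abbreviation "NS \<equiv> {i. i < n \<and> Nn i}"
abbreviation "ES \<equiv> {i. i < n \<and> \<not> Nn i}"

definition a :: "nat \<Rightarrow> int" where "a y = (if Nn y then -1 else int (w y))"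

abbreviation "D \<equiv> Dv n a"
abbreviation "cc m \<equiv> 0 < D m"

lemma carc_sub: "carc n s f \<subseteq> {..<n}"
  unfolding carc_def using n_pos by auto

lemma split_sum:
  assumes "A \<subseteq> {..<n}"
  shows "sum g A = sum g (A \<inter> NS) + sum g (A \<inter> ES)"
proof -
  have fin: "finite A" using assms finite_subset by blast
  have "A = (A \<inter> NS) \<union> (A \<inter> ES)" using assms by auto
  moreover have "(A \<inter> NS) \<inter> (A \<inter> ES) = {}" by auto
  ultimately show ?thesis using fin by (metis finite_Int sum.union_disjoint)
qed

lemma sum_a:
  assumes "A \<subseteq> {..<n}"
  shows "sum a A = int (sum w (A \<inter> ES)) - int (card (A \<inter> NS))"
proof -
  have "sum a (A \<inter> NS) = - int (card (A \<inter> NS))" by (simp add: a_def)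
  moreover have "sum a (A \<inter> ES) = int (sum w (A \<inter> ES))" by (simp add: a_def)
  ultimately show ?thesis using split_sum[OF assms, of a] by simp
qed

definition G :: "nat \<Rightarrow> nat \<Rightarrow> int" where "G u0 k = (\<Sum>i\<le>k. a ((u0 + i) mod n))"

lemma first_hit:
  assumes u0: "u0 < n" "\<not> Nn u0" "0 < w u0" and v: "v < n"
  and nb: "\<forall>x<n. Nn x \<and> x \<noteq> v \<and> x \<in> carc n u0 v \<longrightarrow>
          card (carc n u0 x \<inter> NS) \<noteq> sum w (carc n u0 x \<inter> ES)"
  shows "\<forall>k < dst n u0 v. 0 < G u0 k"
proof (rule ccontr)
  assume "\<not> (\<forall>k < dst n u0 v. 0 < G u0 k)"
  then have ex: "\<exists>k. k < dst n u0 v \<and> G u0 k \<le> 0" by auto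
  define k0 where "k0 = (LEAST k. k < dst n u0 v \<and> G u0 k \<le> 0)"
  have k0: "k0 < dst n u0 v" "G u0 k0 \<le> 0" using LeastI_ex[OF ex] unfolding k0_def by auto
  have kmin: "\<And>k. k < k0 \<Longrightarrow> 0 < G u0 k"
  proof -
    fix k assume "k < k0"
    then have "\<not> (k < dst n u0 v \<and> G u0 k \<le> 0)" unfolding k0_def by (rule not_less_Least)
    then show "0 < G u0 k" using \<open>k < k0\<close> k0 by auto
  qed
  have dl: "dst n u0 v < n" using dst_lt u0 v by blast
  have "G u0 0 = a u0" by (simp add: G_def u0)
  then have "k0 \<noteq> 0"
  proof -
    assume g0: "G u0 0 = a u0"
    show "k0 \<noteq> 0"
    proof
      assume "k0 = 0"
      then show False using k0 g0 u0 by (simp add: a_def)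
    qed
  qed
  then obtain k1 where k1: "k0 = Suc k1" by (cases k0) auto
  define x where "x = (u0 + k0) mod n"
  have xn: "x < n" unfolding x_def using n_pos by simp
  have Gs: "G u0 k0 = G u0 k1 + a x" unfolding G_def x_def k1 by simp
  have pos: "0 < G u0 k1" using kmin k1 by simp
  have Nx: "Nn x" using Gs pos k0 by (auto simp: a_def split: if_splits)
  then have G0: "G u0 k0 = 0" using Gs pos k0 by (simp add: a_def)
  have dx: "dst n u0 x = k0" unfolding x_def using dst_pt[OF u0(1)] k0 dl by simp
  have "sum a (carc n u0 x) = G u0 k0"
    unfolding G_def using sum_carc[OF u0(1) xn, of a] dx x_def by simp
  then have "int (sum w (carc n u0 x \<inter> ES)) = int (card (carc n u0 x \<inter> NS))"
    using sum_a[OF carc_sub, of u0 x] G0 by linarith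
  then have bal: "card (carc n u0 x \<inter> NS) = sum w (carc n u0 x \<inter> ES)"
    using int_int_eq by metis
  have "x \<in> carc n u0 v" using carc_mem[OF u0(1) v] xn dx k0 by simp
  moreover have "x \<noteq> v" using dx k0 by auto
  ultimately show False using nb xn Nx bal by blast
qed

lemma c_inside:
  assumes u0: "u0 < n" and v: "v < n" and pos: "\<forall>k < dst n u0 v. 0 < G u0 k"
  and y: "y \<in> carc n u0 v" "y \<noteq> u0"
  shows "cc y"
proof -
  have yn: "y < n" and dy: "dst n u0 y \<le> dst n u0 v" using carc_mem[OF u0 v] y by auto
  define d where "d = dst n u0 y"
  have dn: "d < n" unfolding d_def using dst_lt u0 yn by blast
  have yd: "y = (u0 + d) mod n" unfolding d_def using pt_dst[OF u0 yn] by simp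
  have d0: "d \<noteq> 0"
  proof
    assume "d = 0"
    then have "y = u0" using yd u0 by simp
    then show False using y by simp
  qed
  define v' where "v' = (y + n - 1) mod n"
  have v'n: "v' < n" unfolding v'_def using n_pos by simp
  have "v' = (u0 + (d - 1)) mod n"
  proof -
    have "v' = ((u0 + d) mod n + n - 1) mod n" unfolding v'_def yd ..
    also have "\<dots> = ((u0 + d) mod n + (n - 1)) mod n" using n_pos by simp
    also have "\<dots> = (u0 + d + (n - 1)) mod n" by (simp add: mod_add_left_eq)
    also have "u0 + d + (n - 1) = (u0 + (d - 1)) + n" using d0 n_pos by simp
    finally show ?thesis by simp
  qed
  then have dv': "dst n u0 v' = d - 1" using dst_pt[OF u0, of "d - 1"] dn by simp
  have "sum a (carc n u0 v') = PS n a (y + n) - PS n a (y + n - Suc (dst n u0 v'))"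
    by (rule sum_carc_PS) (use n_pos u0 v'n v'_def in auto)
  also have "y + n - Suc (dst n u0 v') = y + n - d" using dv' d0 by simp
  finally have e1: "sum a (carc n u0 v') = PS n a (y + n) - PS n a (y + n - d)" .
  have "sum a (carc n u0 v') = G u0 (d - 1)"
    unfolding G_def using sum_carc[OF u0 v'n, of a] dv' by simp
  moreover have "0 < G u0 (d - 1)" using pos dy d0 unfolding d_def by simp
  ultimately have "0 < PS n a (y + n) - PS n a (y + n - d)" using e1 by simp
  then show ?thesis using D_ge[OF dn, of a y] by simp
qed

lemma key:
  assumes v: "v < n" "Nn v" "0 < w v"
  shows "\<exists>e<n. \<not> Nn e \<and> card (carc n e v \<inter> ES) = sum w (carc n e v \<inter> NS) \<and> (\<forall>y\<in>carc n e v. cc y)"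
proof -
  obtain u0 where u0: "u0 < n" "\<not> Nn u0" "0 < w u0"
    and nb: "\<forall>x<n. Nn x \<and> x \<noteq> v \<and> x \<in> carc n u0 v \<longrightarrow>
          card (carc n u0 x \<inter> NS) \<noteq> sum w (carc n u0 x \<inter> ES)"
    using H1[OF v] by blast
  have pos: "\<forall>k < dst n u0 v. 0 < G u0 k" using first_hit[OF u0 v(1) nb] .
  obtain e where e: "e \<in> carc n u0 v" and
    alt: "(Nn e \<and> e \<noteq> v \<and> card (carc n u0 e \<inter> NS) = sum w (carc n u0 e \<inter> ES))
       \<or> (\<not> Nn e \<and> e \<noteq> u0 \<and> card (carc n e v \<inter> ES) = sum w (carc n e v \<inter> NS))"
    using H2[OF u0(1) v(1) u0(2) v(2)] u0 v by auto
  have en: "e < n" using e carc_mem[OF u0(1) v(1)] by auto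
  have alt2: "\<not> Nn e \<and> e \<noteq> u0 \<and> card (carc n e v \<inter> ES) = sum w (carc n e v \<inter> NS)"
    using alt nb en e by blast
  have de: "dst n u0 e \<le> dst n u0 v" using e carc_mem[OF u0(1) v(1)] by auto
  have de0: "dst n u0 e \<noteq> 0"
  proof
    assume "dst n u0 e = 0"
    then have "e = (u0 + 0) mod n" using pt_dst[OF u0(1) en] by simp
    then show False using alt2 u0 by simp
  qed
  have "\<forall>y\<in>carc n e v. cc y"
  proof
    fix y assume y: "y \<in> carc n e v"
    have yn: "y < n" and dy: "dst n e y \<le> dst n e v" using y carc_mem[OF en v(1)] by auto
    have dev: "dst n e v = dst n u0 v - dst n u0 e" using dst_end[OF u0(1) en v(1) de] .
    have tr: "dst n u0 y = dst n u0 e + dst n e y" using dst_trans[OF u0(1) en v(1) yn de dy] .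
    have "y \<in> carc n u0 v" using carc_mem[OF u0(1) v(1)] yn tr dy dev de by simp
    moreover have "y \<noteq> u0" using tr de0 dst_self[of n u0] by auto
    ultimately show "cc y" using c_inside[OF u0(1) v(1) pos] by blast
  qed
  then show ?thesis using en alt2 by blast
qed

end


lemma sum_if_const: "finite A \<Longrightarrow> (\<Sum>x\<in>A. if P x then (c::int) else 0) = c * int (card (A \<inter> {x. P x}))"
  by (simp add: sum.If_cases)

context core begin

lemma fin_NS: "finite NS" by simp
lemma fin_ES: "finite ES" by simp

lemma carc_self: "v < n \<Longrightarrow> carc n v v = {v}"
  by (simp add: carc_def dst_def)

definition b :: "nat \<Rightarrow> int" where
  "b y = (if Nn y then int (w y) else - (if cc y then 1 else 0))"

lemma PS_lessThan: "PS n f n = sum f {..<n}"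
  unfolding PS_def by simp

lemma p_le: "int (sum w NS) \<le> int (card {y. y < n \<and> \<not> Nn y \<and> cc y})"
proof (rule ccontr)
  assume A: "\<not> ?thesis"
  have "sum b {..<n} = sum b ({..<n} \<inter> NS) + sum b ({..<n} \<inter> ES)" by (rule split_sum) simp
  moreover have "{..<n} \<inter> NS = NS" by auto
  moreover have "{..<n} \<inter> ES = ES" by auto
  moreover have "sum b NS = int (sum w NS)" by (simp add: b_def)
  moreover have "sum b ES = - int (card {y. y < n \<and> \<not> Nn y \<and> cc y})"
  proof -
    have "sum b ES = (\<Sum>y\<in>ES. if cc y then (-1::int) else 0)" by (rule sum.cong) (auto simp: b_def)
    also have "\<dots> = - int (card (ES \<inter> {y. cc y}))" by (simp add: sum_if_const)
    also have "ES \<inter> {y. cc y} = {y. y < n \<and> \<not> Nn y \<and> cc y}" by auto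
    finally show ?thesis .
  qed
  ultimately have T: "0 < PS n b n" using A PS_lessThan by simp
  obtain M where M: "n \<le> M" "\<And>k. 1 \<le> k \<and> k \<le> n \<Longrightarrow> PS n b (M - k) < PS n b M"
    using CLpos[OF n_pos T] by blast
  define v where "v = (M - 1) mod n"
  have vn: "v < n" unfolding v_def using n_pos by simp
  have "sum b (carc n v v) = PS n b M - PS n b (M - Suc (dst n v v))"
    by (rule sum_carc_PS) (use n_pos vn M v_def in auto)
  then have "0 < b v" using M(2)[of 1] n_pos carc_self[OF vn] by (simp add: dst_self)
  then have Nv: "Nn v" "0 < w v" by (auto simp: b_def split: if_splits)
  obtain e where e: "e < n" "\<not> Nn e" "card (carc n e v \<inter> ES) = sum w (carc n e v \<inter> NS)"
    "\<forall>y\<in>carc n e v. cc y" using key[OF vn Nv] by blast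
  have "sum b (carc n e v) = PS n b M - PS n b (M - Suc (dst n e v))"
    by (rule sum_carc_PS) (use n_pos vn e M v_def in auto)
  moreover have "Suc (dst n e v) \<le> n" using dst_lt[OF e(1) vn] by simp
  ultimately have pos: "0 < sum b (carc n e v)" using M(2)[of "Suc (dst n e v)"] by simp
  let ?A = "carc n e v"
  have "sum b ?A = sum b (?A \<inter> NS) + sum b (?A \<inter> ES)" by (rule split_sum[OF carc_sub])
  moreover have "sum b (?A \<inter> NS) = int (sum w (?A \<inter> NS))" by (simp add: b_def)
  moreover have "sum b (?A \<inter> ES) = - int (card (?A \<inter> ES))"
  proof -
    have "sum b (?A \<inter> ES) = (\<Sum>y\<in>?A \<inter> ES. (-1::int))" by (rule sum.cong) (use e(4) in \<open>auto simp: b_def\<close>)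
    then show ?thesis by simp
  qed
  ultimately have "sum b ?A = 0" using e(3) by simp
  then show False using pos by simp
qed

lemma q_ge: "int (card {m. m < n \<and> Nn m \<and> cc m}) \<le> int (sum w ES)"
proof -
  define r where "r m = (if Nn m then (if cc m then -1 else 0) else int (w m))" for m
  have "(\<Sum>m<n. max 0 (D m + a (m mod n))) = (\<Sum>m<n. D m + r m)"
  proof (rule sum.cong)
    fix m assume "m \<in> {..<n}"
    then have mm: "m mod n = m" by simp
    have "0 \<le> D m" by (rule D_nonneg[OF n_pos])
    then show "max 0 (D m + a (m mod n)) = D m + r m" unfolding mm r_def a_def by auto
  qed simp
  then have "(\<Sum>m<n. D m) \<le> (\<Sum>m<n. D m) + (\<Sum>m<n. r m)"
    using D_count[OF n_pos, of a] by (simp add: sum.distrib)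
  then have r0: "0 \<le> (\<Sum>m<n. r m)" by simp
  have "(\<Sum>m<n. r m) = sum r ({..<n} \<inter> NS) + sum r ({..<n} \<inter> ES)" by (rule split_sum) simp
  moreover have "{..<n} \<inter> NS = NS" by auto
  moreover have "{..<n} \<inter> ES = ES" by auto
  moreover have "sum r ES = int (sum w ES)" by (simp add: r_def)
  moreover have "sum r NS = - int (card {m. m < n \<and> Nn m \<and> cc m})"
  proof -
    have "sum r NS = (\<Sum>y\<in>NS. if cc y then (-1::int) else 0)" by (rule sum.cong) (auto simp: r_def)
    also have "\<dots> = - int (card (NS \<inter> {y. cc y}))" by (simp add: sum_if_const)
    also have "NS \<inter> {y. cc y} = {m. m < n \<and> Nn m \<and> cc m}" by auto
    finally show ?thesis .
  qed
  ultimately show ?thesis using r0 by simp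
qed

end


context core begin

lemma cc_mod: "cc m = cc (m mod n)"
  using D_mod[of n a m] by simp

lemma cc_Suc_mod: "cc (Suc m) = cc (Suc (m mod n))"
  using cc_mod[of "Suc m"] cc_mod[of "Suc (m mod n)"] by (simp add: mod_Suc_eq)

lemma NE_card: "card NS + card ES = n"
proof -
  have "NS \<union> ES = {..<n}" by auto
  moreover have "NS \<inter> ES = {}" by auto
  ultimately show ?thesis using card_Un_disjoint[of NS ES] by simp
qed

theorem core_main:
  assumes pq: "(sum w NS, sum w ES) \<noteq> (0, 0)"
  shows "sum w NS * \<beta> < sum w ES * \<alpha>"
proof -
  define P where "P = sum w NS"
  define Q where "Q = sum w ES"
  define cN where "cN = card {m. m < n \<and> Nn m \<and> cc m}"
  define cE where "cE = card {m. m < n \<and> \<not> Nn m \<and> cc m}"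
  have PcE: "P \<le> cE" using p_le unfolding P_def cE_def by (simp only: of_nat_le_iff)
  have QcN: "cN \<le> Q" using q_ge unfolding Q_def cN_def by (simp only: of_nat_le_iff)
  have cEa: "cE \<le> \<alpha>" unfolding cE_def cardE[symmetric] by (rule card_mono) auto
  have cNb: "cN \<le> \<beta>" unfolding cN_def cardN[symmetric] by (rule card_mono) auto
  show ?thesis
  proof (cases "\<beta> < Q")
    case True
    then have "Q \<noteq> 0" by simp
    then have "ES \<noteq> {}" unfolding Q_def by auto
    then have "0 < card ES" using fin_ES by (simp add: card_gt_0_iff)
    then have "0 < \<alpha>" using cardE by simp
    have "P * \<beta> \<le> \<alpha> * \<beta>" using PcE cEa by simp
    also have "\<alpha> * \<beta> < Q * \<alpha>" using True \<open>0 < \<alpha>\<close> by (simp add: mult.commute)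
    finally show ?thesis unfolding P_def Q_def .
  next
    case False
    then have Qb: "Q \<le> \<beta>" by simp
    have PSa: "PS n a n = int Q - int \<beta>"
    proof -
      have "PS n a n = sum a {..<n}" by (rule PS_lessThan)
      also have "\<dots> = int (sum w ({..<n} \<inter> ES)) - int (card ({..<n} \<inter> NS))" by (rule sum_a) simp
      also have "{..<n} \<inter> ES = ES" by auto
      also have "{..<n} \<inter> NS = NS" by auto
      finally show ?thesis using cardN Q_def by simp
    qed
    then have T: "PS n a n \<le> 0" using Qb by simp
    have ex1: "\<exists>m. cc m"
    proof (cases "P = 0")
      case False
      then have "cE \<noteq> 0" using PcE by simp
      then have "{m. m < n \<and> \<not> Nn m \<and> cc m} \<noteq> {}" unfolding cE_def by auto
      then show ?thesis by auto
    next
      case True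
      then have "Q \<noteq> 0" using pq P_def Q_def by simp
      have "\<exists>u\<in>ES. w u \<noteq> 0"
      proof (rule ccontr)
        assume "\<not> (\<exists>u\<in>ES. w u \<noteq> 0)"
        then have "sum w ES = 0" by (intro sum.neutral) blast
        then show False using \<open>Q \<noteq> 0\<close> Q_def by simp
      qed
      then obtain u where u: "u \<in> ES" "w u \<noteq> 0" by blast
      have "ES \<noteq> {}" using u by auto
      then have "0 < card ES" using fin_ES by (simp add: card_gt_0_iff)
      then have "1 \<le> \<alpha>" using cardE by simp
      moreover have "1 \<le> \<beta>" using Qb \<open>Q \<noteq> 0\<close> by simp
      ultimately have n2: "1 < n" using NE_card cardN cardE by simp
      have "PS n a (Suc u + n) - PS n a (Suc u + n - 1) \<le> D (Suc u)" by (rule D_ge[OF n2])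
      moreover have "PS n a (Suc u + n) = PS n a (u + n) + a u"
        using PS_Suc[of n a "u + n"] u by simp
      moreover have "Suc u + n - 1 = u + n" by simp
      moreover have "a u = int (w u)" using u by (simp add: a_def)
      ultimately have "cc (Suc u)" using u by simp
      then show ?thesis by blast
    qed
    have ex2: "\<exists>m. \<not> cc m"
    proof -
      obtain m where m: "\<forall>k<n. PS n a (m + n) - PS n a (m + n - k) \<le> 0"
        using CLnonpos[OF n_pos T] by blast
      obtain k where k: "k < n" "D m = PS n a (m + n) - PS n a (m + n - k)" using D_ex[OF n_pos] by blast
      have "PS n a (m + n) - PS n a (m + n - k) \<le> 0" using m k(1) by blast
      then have "\<not> cc m" using k(2) by simp
      then show ?thesis by blast
    qed
    have trans: "\<exists>m<n. cc m \<and> \<not> cc (Suc m)"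
    proof (rule ccontr)
      assume "\<not> ?thesis"
      then have st: "\<And>m. m < n \<Longrightarrow> cc m \<Longrightarrow> cc (Suc m)" by blast
      have st2: "\<And>m. cc m \<Longrightarrow> cc (Suc m)"
      proof -
        fix m assume "cc m"
        then have "cc (m mod n)" using cc_mod by simp
        then have "cc (Suc (m mod n))" using st n_pos by simp
        then show "cc (Suc m)" using cc_Suc_mod by simp
      qed
      obtain m1 where m1: "cc m1" using ex1 by blast
      obtain m2 where m2: "\<not> cc m2" using ex2 by blast
      have all: "\<And>j. cc (m1 mod n + j)"
      proof -
        fix j show "cc (m1 mod n + j)"
        proof (induction j)
          case 0 then show ?case using m1 cc_mod by simp
        next
          case (Suc j) then show ?case using st2 by simp
        qed
      qed
      have "m1 mod n < n" using n_pos by simp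
      then have "m1 mod n + (n - m1 mod n + m2) = m2 + n" by simp
      then have "cc (m2 + n)" using all[of "n - m1 mod n + m2"] by (simp add: add.commute)
      then have "cc m2" using D_per[of n a m2] by simp
      then show False using m2 by simp
    qed
    then obtain m0 where m0: "m0 < n" "cc m0" "\<not> cc (Suc m0)" by blast
    define Cf where "Cf m = (if cc m then 1 else (0::int))" for m
    define t where "t m = (Cf m - Cf (Suc m)) * (h (Suc m) + int \<beta>)" for m
    have tnn: "\<And>m. m < n \<Longrightarrow> 0 \<le> t m"
    proof -
      fix m assume mn: "m < n"
      have mm: "m mod n = m" using mn by simp
      have hb: "- int (\<alpha> + \<beta>) < h m \<and> h m \<le> 0" using hbnd mn by simp
      consider "cc m = cc (Suc m)" | "cc m \<and> \<not> cc (Suc m)" | "\<not> cc m \<and> cc (Suc m)" by blast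
      then show "0 \<le> t m"
      proof cases
        case 1 then show ?thesis by (simp add: t_def Cf_def)
      next
        case 2
        have "Nn m"
        proof (rule ccontr)
          assume "\<not> Nn m"
          then have "0 \<le> a (m mod n)" unfolding mm by (simp add: a_def)
          then have "cc (Suc m)" using D_step_pos[OF n_pos T] 2 by blast
          then show False using 2 by simp
        qed
        then show ?thesis using 2 hstep[OF mn] hb by (simp add: t_def Cf_def)
      next
        case 3
        have "\<not> Nn m"
        proof
          assume "Nn m"
          then have "a (m mod n) = -1" unfolding mm by (simp add: a_def)
          moreover have "D m \<le> 0" using 3 by simp
          ultimately have "D (Suc m) \<le> 0" using D_step_le[OF n_pos, of a m] by simp
          then show False using 3 by simp
        qed
        then show ?thesis using 3 hstep[OF mn] hb by (simp add: t_def Cf_def)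
      qed
    qed
    have tpos: "0 < t m0"
    proof -
      have hb: "- int (\<alpha> + \<beta>) < h m0 \<and> h m0 \<le> 0" using hbnd m0 by simp
      have mm: "m0 mod n = m0" using m0 by simp
      have "Nn m0"
      proof (rule ccontr)
        assume "\<not> Nn m0"
        then have "0 \<le> a (m0 mod n)" unfolding mm by (simp add: a_def)
        then have "cc (Suc m0)" using D_step_pos[OF n_pos T] m0 by blast
        then show False using m0 by simp
      qed
      then show ?thesis using m0 hstep[OF m0(1)] hb by (simp add: t_def Cf_def)
    qed
    have sumt: "0 < (\<Sum>m<n. t m)"
      by (rule sum_pos2[of "{..<n}" m0]) (use m0 tpos tnn in auto)
    have tele: "(\<Sum>m<n. Cf (Suc m) * (h (Suc m) + int \<beta>) - Cf m * (h m + int \<beta>)) = 0"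
    proof -
      have "(\<Sum>m<n. Cf (Suc m) * (h (Suc m) + int \<beta>) - Cf m * (h m + int \<beta>))
            = Cf n * (h n + int \<beta>) - Cf 0 * (h 0 + int \<beta>)"
        by (rule sum_lessThan_telescope[where f = "\<lambda>m. Cf m * (h m + int \<beta>)"])
      moreover have "Cf n = Cf 0" using D_per[of n a 0] by (simp add: Cf_def)
      ultimately show ?thesis using h0 hn by simp
    qed
    have "(\<Sum>m<n. Cf m * (h (Suc m) - h m))
          = (\<Sum>m<n. t m + (Cf (Suc m) * (h (Suc m) + int \<beta>) - Cf m * (h m + int \<beta>)))"
      by (rule sum.cong) (simp_all add: t_def algebra_simps)
    also have "\<dots> = (\<Sum>m<n. t m)" using tele by (simp add: sum.distrib)
    finally have S1: "0 < (\<Sum>m<n. Cf m * (h (Suc m) - h m))" using sumt by simp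
    have "(\<Sum>m<n. Cf m * (h (Suc m) - h m))
          = (\<Sum>m<n. (if Nn m \<and> cc m then int \<alpha> else 0) - (if \<not> Nn m \<and> cc m then int \<beta> else 0))"
      by (rule sum.cong) (simp_all add: hstep Cf_def)
    also have "\<dots> = int \<alpha> * int (card ({..<n} \<inter> {m. Nn m \<and> cc m}))
                 - int \<beta> * int (card ({..<n} \<inter> {m. \<not> Nn m \<and> cc m}))"
      by (simp add: sum_subtractf sum_if_const)
    also have "{..<n} \<inter> {m. Nn m \<and> cc m} = {m. m < n \<and> Nn m \<and> cc m}" by auto
    also have "{..<n} \<inter> {m. \<not> Nn m \<and> cc m} = {m. m < n \<and> \<not> Nn m \<and> cc m}" by auto
    finally have S2: "int \<beta> * int cE < int \<alpha> * int cN" using S1 unfolding cN_def cE_def by simp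
    have "int P * int \<beta> \<le> int cE * int \<beta>" using PcE by (simp add: mult_right_mono)
    also have "\<dots> < int \<alpha> * int cN" using S2 by (simp add: mult.commute)
    also have "\<dots> \<le> int \<alpha> * int Q" using QcN by (simp add: mult_left_mono)
    finally have "int (P * \<beta>) < int (Q * \<alpha>)" by (simp add: mult.commute)
    then have "P * \<beta> < Q * \<alpha>" by (simp only: of_nat_less_iff)
    then show ?thesis unfolding P_def Q_def .
  qed
qed

end


lemma card_Suc_filter: "card {j. j < Suc i \<and> P j} = card {j. j < i \<and> P j} + (if P i then 1 else 0)"
proof -
  have "{j. j < Suc i \<and> P j} = {j. j < i \<and> P j} \<union> (if P i then {i} else {})" by (auto simp: less_Suc_eq)
  then show ?thesis by (auto simp: card_insert_if)
qed

lemma isN_dpos: "isN d1 d2 i = (snd (dpos d1 d2 i) < d2 \<and> (snd (dpos d1 d2 i) + 1) * d1 \<le> fst (dpos d1 d2 i) * d2)"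
  by (simp add: isN_def split: prod.splits)

lemma dpos_Suc: "dpos d1 d2 (Suc i) = (if isN d1 d2 i then (fst (dpos d1 d2 i), Suc (snd (dpos d1 d2 i)))
   else (Suc (fst (dpos d1 d2 i)), snd (dpos d1 d2 i)))"
  by (simp add: isN_def split: prod.splits)

declare dpos.simps(2)[simp del]

lemma dpos_count: "dpos d1 d2 i = (card {j. j < i \<and> \<not> isN d1 d2 j}, card {j. j < i \<and> isN d1 d2 j})"
proof (induction i)
  case 0 then show ?case by simp
next
  case (Suc i)
  then show ?case by (simp add: dpos_Suc card_Suc_filter)
qed

lemma dpos_inv: "i \<le> d1 + d2 \<Longrightarrow> fst (dpos d1 d2 i) \<le> d1 \<and> snd (dpos d1 d2 i) \<le> d2
   \<and> fst (dpos d1 d2 i) + snd (dpos d1 d2 i) = i \<and> snd (dpos d1 d2 i) * d1 \<le> fst (dpos d1 d2 i) * d2"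
proof (induction i)
  case 0 then show ?case by simp
next
  case (Suc i)
  obtain x y where xy: "dpos d1 d2 i = (x, y)" by force
  have IH: "x \<le> d1" "y \<le> d2" "x + y = i" "y * d1 \<le> x * d2" using Suc xy by auto
  show ?case
  proof (cases "isN d1 d2 i")
    case True
    then have c: "y < d2" "(y + 1) * d1 \<le> x * d2" using isN_dpos[of d1 d2 i] xy by auto
    then show ?thesis using IH True xy by (simp add: dpos_Suc)
  next
    case False
    then have c: "\<not> (y < d2 \<and> (y + 1) * d1 \<le> x * d2)" using isN_dpos[of d1 d2 i] xy by auto
    have "x < d1"
    proof (rule ccontr)
      assume "\<not> x < d1"
      then have "x = d1" using IH by simp
      then have "y < d2" using IH Suc by simp
      then have "y + 1 \<le> d2" by simp
      then have "d1 * (y + 1) \<le> d1 * d2" by (rule mult_left_mono) simp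
      then have "(y + 1) * d1 \<le> x * d2" using \<open>x = d1\<close> by (simp add: mult.commute)
      then show False using c \<open>y < d2\<close> by simp
    qed
    moreover have "y * d1 \<le> (x + 1) * d2" using IH by (simp add: add_mult_distrib)
    ultimately show ?thesis using IH False xy by (simp add: dpos_Suc)
  qed
qed

lemma dpos_end: "dpos d1 d2 (d1 + d2) = (d1, d2)"
  using dpos_inv[of "d1 + d2" d1 d2] by (cases "dpos d1 d2 (d1 + d2)") auto

lemma card_edgesN: "card (edgesN d1 d2) = d2"
  using dpos_count[of d1 d2 "d1 + d2"] dpos_end[of d1 d2] unfolding edgesN_def by simp

lemma card_edgesE: "card (edgesE d1 d2) = d1"
  using dpos_count[of d1 d2 "d1 + d2"] dpos_end[of d1 d2] unfolding edgesE_def by simp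

definition hh :: "nat \<Rightarrow> nat \<Rightarrow> nat \<Rightarrow> int" where
  "hh d1 d2 i = int (snd (dpos d1 d2 i)) * int d1 - int (fst (dpos d1 d2 i)) * int d2"

lemma hh0: "hh d1 d2 0 = 0" by (simp add: hh_def)
lemma hhn: "hh d1 d2 (d1 + d2) = 0" by (simp add: hh_def dpos_end)

lemma hh_step: "hh d1 d2 (Suc i) = hh d1 d2 i + (if isN d1 d2 i then int d1 else - int d2)"
  by (simp add: hh_def dpos_Suc algebra_simps)

lemma hh_le: "i \<le> d1 + d2 \<Longrightarrow> hh d1 d2 i \<le> 0"
proof -
  assume "i \<le> d1 + d2"
  then have "snd (dpos d1 d2 i) * d1 \<le> fst (dpos d1 d2 i) * d2" using dpos_inv by blast
  then have "int (snd (dpos d1 d2 i) * d1) \<le> int (fst (dpos d1 d2 i) * d2)" by (simp only: of_nat_le_iff)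
  then show ?thesis by (simp add: hh_def)
qed

lemma hh_gt: "0 < d1 + d2 \<Longrightarrow> i \<le> d1 + d2 \<Longrightarrow> - int (d1 + d2) < hh d1 d2 i"
proof (induction i)
  case 0 then show ?case by (auto simp: hh0)
next
  case (Suc i)
  then have IH: "- int (d1 + d2) < hh d1 d2 i" by simp
  show ?case
  proof (cases "isN d1 d2 i")
    case True then show ?thesis using IH hh_step[of d1 d2 i] by simp
  next
    case False
    obtain x y where xy: "dpos d1 d2 i = (x, y)" by force
    have inv: "x \<le> d1" "y \<le> d2" "x + y = i" using dpos_inv[of i d1 d2] Suc xy by auto
    have c: "\<not> (y < d2 \<and> (y + 1) * d1 \<le> x * d2)" using False isN_dpos[of d1 d2 i] xy by auto
    have "- int d1 < hh d1 d2 i"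
    proof (cases "y < d2")
      case True
      then have "x * d2 < (y + 1) * d1" using c by simp
      then have "int x * int d2 < (int y + 1) * int d1" by (metis of_nat_less_iff of_nat_mult of_nat_Suc Suc_eq_plus1 add.commute)
      then show ?thesis using xy by (simp add: hh_def algebra_simps)
    next
      case False
      then have "y = d2" using inv by simp
      then have "x < d1" using inv Suc by simp
      then have "int x * int d2 \<le> int d1 * int d2" by (simp add: mult_right_mono)
      then show ?thesis using xy \<open>y = d2\<close> \<open>x < d1\<close> by (simp add: hh_def algebra_simps)
    qed
    then show ?thesis using False hh_step[of d1 d2 i] by simp
  qed
qed



lemma NS_eq: "{i. i < d1 + d2 \<and> isN d1 d2 i} = edgesN d1 d2" by (simp add: edgesN_def)
lemma ES_eq: "{i. i < d1 + d2 \<and> \<not> isN d1 d2 i} = edgesE d1 d2" by (simp add: edgesE_def)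

lemma in_shadowSet:
  assumes "sum w (A - shadowSet d1 d2 w B) = 0" "finite A" "v \<in> A" "0 < w v"
  shows "\<exists>u\<in>B. v \<in> shadow d1 d2 w u"
proof (rule ccontr)
  assume "\<not> ?thesis"
  then have "v \<in> A - shadowSet d1 d2 w B" using assms(3) by (auto simp: shadowSet_def)
  then have "w v = 0" using assms(1,2) by (simp add: sum_eq_0_iff)
  then show False using assms(4) by simp
qed

lemma dst_lt_of_ne:
  assumes "s < n" "x < n" "v < n" "dst n s x \<le> dst n s v" "x \<noteq> v"
  shows "dst n s x < dst n s v"
proof (rule ccontr)
  assume "\<not> ?thesis"
  then have "dst n s x = dst n s v" using assms by simp
  then have "(s + dst n s x) mod n = (s + dst n s v) mod n" by simp
  then show False using pt_dst assms by simp
qed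

lemma plus_core:
  assumes w: "w \<in> CG0plus d1 d2 p q" and n: "0 < d1 + d2"
  shows "core (d1 + d2) (isN d1 d2) w d1 d2 (hh d1 d2)"
proof
  let ?n = "d1 + d2"
  show "0 < ?n" by (rule n)
  show "card {i. i < ?n \<and> isN d1 d2 i} = d2" by (simp add: NS_eq card_edgesN)
  show "card {i. i < ?n \<and> \<not> isN d1 d2 i} = d1" by (simp add: ES_eq card_edgesE)
  show "hh d1 d2 0 = 0" by (rule hh0)
  show "hh d1 d2 ?n = 0" by (rule hhn)
  show "\<And>m. m < ?n \<Longrightarrow> hh d1 d2 (Suc m) = hh d1 d2 m + (if isN d1 d2 m then int d1 else - int d2)"
    by (rule hh_step)
  show "\<And>m. m \<le> ?n \<Longrightarrow> - int (d1 + d2) < hh d1 d2 m \<and> hh d1 d2 m \<le> 0"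
    using hh_gt[OF n] hh_le by blast
  have wd: "compatible d1 d2 w" "sum w (edgesN d1 d2 - shadowSet d1 d2 w (edgesE d1 d2)) = 0"
    using w by (auto simp: CG0plus_def)
  show "\<And>v. v < ?n \<Longrightarrow> isN d1 d2 v \<Longrightarrow> 0 < w v \<Longrightarrow> (\<exists>u0<?n. \<not> isN d1 d2 u0 \<and> 0 < w u0 \<and>
      (\<forall>x<?n. isN d1 d2 x \<and> x \<noteq> v \<and> x \<in> carc ?n u0 v \<longrightarrow>
          card (carc ?n u0 x \<inter> {i. i < ?n \<and> isN d1 d2 i}) \<noteq> sum w (carc ?n u0 x \<inter> {i. i < ?n \<and> \<not> isN d1 d2 i})))"
  proof -
    fix v assume v: "v < ?n" "isN d1 d2 v" "0 < w v"
    have vN: "v \<in> edgesN d1 d2" using v by (simp add: edgesN_def)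
    obtain u0 where u0E: "u0 \<in> edgesE d1 d2" and vs: "v \<in> shadow d1 d2 w u0"
      using in_shadowSet[OF wd(2) _ vN v(3)] by (auto simp: edgesN_def)
    have wu0: "w u0 \<noteq> 0"
    proof
      assume "w u0 = 0"
      then have "shadow d1 d2 w u0 = {}" by (simp add: shadow_def)
      then show False using vs by simp
    qed
    have u0: "u0 < ?n" "\<not> isN d1 d2 u0" using u0E by (auto simp: edgesE_def)
    define P where "P = (\<lambda>v. v \<in> edgesN d1 d2 \<and>
                   card (arc d1 d2 u0 v \<inter> edgesN d1 d2) = sum w (arc d1 d2 u0 v \<inter> edgesE d1 d2))"
    have sh: "v \<in> (if \<exists>v. P v then arc d1 d2 u0 (arg_min (\<lambda>v. card (arc d1 d2 u0 v)) P) \<inter> edgesN d1 d2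
                 else edgesN d1 d2)"
    proof -
      have "shadow d1 d2 w u0 = (if \<exists>v. P v then arc d1 d2 u0 (arg_min (\<lambda>v. card (arc d1 d2 u0 v)) P) \<inter> edgesN d1 d2
                 else edgesN d1 d2)"
        using wu0 u0E unfolding shadow_def Let_def P_def by simp
      then show ?thesis using vs by simp
    qed
    have "\<forall>x<?n. isN d1 d2 x \<and> x \<noteq> v \<and> x \<in> carc ?n u0 v \<longrightarrow>
          card (carc ?n u0 x \<inter> {i. i < ?n \<and> isN d1 d2 i}) \<noteq> sum w (carc ?n u0 x \<inter> {i. i < ?n \<and> \<not> isN d1 d2 i})"
    proof (intro allI impI notI)
      fix x assume x: "x < ?n" "isN d1 d2 x \<and> x \<noteq> v \<and> x \<in> carc ?n u0 v"
        and bal: "card (carc ?n u0 x \<inter> {i. i < ?n \<and> isN d1 d2 i}) = sum w (carc ?n u0 x \<inter> {i. i < ?n \<and> \<not> isN d1 d2 i})"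
      have xN: "x \<in> edgesN d1 d2" using x by (simp add: edgesN_def)
      have Ax: "arc d1 d2 u0 x = carc ?n u0 x" using arc_carc u0(1) x(1) by blast
      have Px: "P x" using bal xN unfolding P_def Ax NS_eq ES_eq by simp
      then have ex: "\<exists>v. P v" by blast
      define m where "m = arg_min (\<lambda>v. card (arc d1 d2 u0 v)) P"
      have Pm: "P m" and mle: "card (arc d1 d2 u0 m) \<le> card (arc d1 d2 u0 x)"
        using arg_min_nat_lemma[of P x "\<lambda>v. card (arc d1 d2 u0 v)"] Px unfolding m_def by auto
      have mn: "m < ?n" using Pm by (simp add: P_def edgesN_def)
      have vm: "v \<in> carc ?n u0 m" using sh ex mn u0 unfolding m_def[symmetric] by (simp add: arc_carc)
      have d1': "dst ?n u0 v \<le> dst ?n u0 m" using vm carc_mem[OF u0(1) mn] by simp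
      have d2': "dst ?n u0 x < dst ?n u0 v"
        using x carc_mem[OF u0(1) v(1)] dst_lt_of_ne[OF u0(1) x(1) v(1)] by auto
      have "card (arc d1 d2 u0 m) = Suc (dst ?n u0 m)" using arc_carc card_carc u0 mn by simp
      moreover have "card (arc d1 d2 u0 x) = Suc (dst ?n u0 x)" using arc_carc card_carc u0 x by simp
      ultimately show False using mle d1' d2' by simp
    qed
    then show "\<exists>u0<?n. \<not> isN d1 d2 u0 \<and> 0 < w u0 \<and>
      (\<forall>x<?n. isN d1 d2 x \<and> x \<noteq> v \<and> x \<in> carc ?n u0 v \<longrightarrow>
          card (carc ?n u0 x \<inter> {i. i < ?n \<and> isN d1 d2 i}) \<noteq> sum w (carc ?n u0 x \<inter> {i. i < ?n \<and> \<not> isN d1 d2 i}))"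
      using u0 wu0 by blast
  qed
  show "\<And>u0 v. u0 < ?n \<Longrightarrow> v < ?n \<Longrightarrow> \<not> isN d1 d2 u0 \<Longrightarrow> isN d1 d2 v \<Longrightarrow> 0 < w u0 * w v \<Longrightarrow>
      (\<exists>e\<in>carc ?n u0 v.
         (isN d1 d2 e \<and> e \<noteq> v \<and> card (carc ?n u0 e \<inter> {i. i < ?n \<and> isN d1 d2 i}) = sum w (carc ?n u0 e \<inter> {i. i < ?n \<and> \<not> isN d1 d2 i}))
       \<or> (\<not> isN d1 d2 e \<and> e \<noteq> u0 \<and> card (carc ?n e v \<inter> {i. i < ?n \<and> \<not> isN d1 d2 i}) = sum w (carc ?n e v \<inter> {i. i < ?n \<and> isN d1 d2 i})))"
  proof -
    fix u0 v assume a: "u0 < ?n" "v < ?n" "\<not> isN d1 d2 u0" "isN d1 d2 v" "0 < w u0 * w v"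
    have "u0 \<in> edgesE d1 d2" "v \<in> edgesN d1 d2" using a by (auto simp: edgesE_def edgesN_def)
    then obtain e where e: "e \<in> arc d1 d2 u0 v" and
      alt: "(e \<in> edgesN d1 d2 - {v} \<and>
           card (arc d1 d2 u0 e \<inter> edgesN d1 d2) = sum w (arc d1 d2 u0 e \<inter> edgesE d1 d2))
      \<or> (e \<in> edgesE d1 d2 - {u0} \<and>
           card (arc d1 d2 e v \<inter> edgesE d1 d2) = sum w (arc d1 d2 e v \<inter> edgesN d1 d2))"
      using wd(1) a(5) unfolding compatible_def by blast
    have e': "e \<in> carc ?n u0 v" using e a arc_carc by simp
    then have en: "e < ?n" using carc_mem[OF a(1,2)] by simp
    show "\<exists>e\<in>carc ?n u0 v.
         (isN d1 d2 e \<and> e \<noteq> v \<and> card (carc ?n u0 e \<inter> {i. i < ?n \<and> isN d1 d2 i}) = sum w (carc ?n u0 e \<inter> {i. i < ?n \<and> \<not> isN d1 d2 i}))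
       \<or> (\<not> isN d1 d2 e \<and> e \<noteq> u0 \<and> card (carc ?n e v \<inter> {i. i < ?n \<and> \<not> isN d1 d2 i}) = sum w (carc ?n e v \<inter> {i. i < ?n \<and> isN d1 d2 i}))"
      unfolding NS_eq ES_eq
    proof (rule bexI[OF _ e'])
      have A1: "arc d1 d2 u0 e = carc ?n u0 e" using arc_carc a(1) en by blast
      have A2: "arc d1 d2 e v = carc ?n e v" using arc_carc a(2) en by blast
      have eN: "e \<in> edgesN d1 d2 \<longleftrightarrow> isN d1 d2 e" using en by (simp add: edgesN_def)
      have eE: "e \<in> edgesE d1 d2 \<longleftrightarrow> \<not> isN d1 d2 e" using en by (simp add: edgesE_def)
      from alt show "(isN d1 d2 e \<and> e \<noteq> v \<and> card (carc ?n u0 e \<inter> edgesN d1 d2) = sum w (carc ?n u0 e \<inter> edgesE d1 d2))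
       \<or> (\<not> isN d1 d2 e \<and> e \<noteq> u0 \<and> card (carc ?n e v \<inter> edgesE d1 d2) = sum w (carc ?n e v \<inter> edgesN d1 d2))"
      proof
        assume "e \<in> edgesN d1 d2 - {v} \<and> card (arc d1 d2 u0 e \<inter> edgesN d1 d2) = sum w (arc d1 d2 u0 e \<inter> edgesE d1 d2)"
        then show ?thesis unfolding A1 using eN by simp
      next
        assume "e \<in> edgesE d1 d2 - {u0} \<and> card (arc d1 d2 e v \<inter> edgesE d1 d2) = sum w (arc d1 d2 e v \<inter> edgesN d1 d2)"
        then show ?thesis unfolding A2 using eE by simp
      qed
    qed
  qed
qed



definition rv :: "nat \<Rightarrow> nat \<Rightarrow> nat" where "rv n x = n - 1 - x"

lemma rv_rv: "x < n \<Longrightarrow> rv n (rv n x) = x" by (simp add: rv_def)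
lemma rv_lt: "x < n \<Longrightarrow> rv n x < n" by (simp add: rv_def)
lemma inj_rv: "inj_on (rv n) {..<n}"
  by (rule inj_onI) (simp add: rv_def)

lemma dst_rv: "f < n \<Longrightarrow> x < n \<Longrightarrow> dst n (rv n f) (rv n x) = dst n x f"
  by (auto simp: dst_def rv_def)

lemma dst_swap: "s < n \<Longrightarrow> f < n \<Longrightarrow> x < n \<Longrightarrow> (dst n x f \<le> dst n s f) = (dst n s x \<le> dst n s f)"
  by (auto simp: dst_def split: if_splits)

lemma carc_rv:
  assumes s: "s < n" and f: "f < n"
  shows "carc n (rv n f) (rv n s) = rv n ` carc n s f"
proof (rule set_eqI)
  fix y
  have rf: "rv n f < n" "rv n s < n" using s f rv_lt by auto
  show "y \<in> carc n (rv n f) (rv n s) \<longleftrightarrow> y \<in> rv n ` carc n s f"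
  proof
    assume y: "y \<in> carc n (rv n f) (rv n s)"
    then have yn: "y < n" and d: "dst n (rv n f) y \<le> dst n (rv n f) (rv n s)" using carc_mem[OF rf] by auto
    have ry: "rv n y < n" using yn rv_lt by simp
    have "dst n (rv n f) y = dst n (rv n y) f" using dst_rv[OF f ry] rv_rv[OF yn] by simp
    moreover have "dst n (rv n f) (rv n s) = dst n s f" using dst_rv[OF f s] .
    ultimately have "dst n (rv n y) f \<le> dst n s f" using d by simp
    then have "dst n s (rv n y) \<le> dst n s f" using dst_swap[OF s f ry] by simp
    then have "rv n y \<in> carc n s f" using carc_mem[OF s f] ry by simp
    then show "y \<in> rv n ` carc n s f" using rv_rv[OF yn] by (metis image_eqI)
  next
    assume "y \<in> rv n ` carc n s f"
    then obtain z where z: "z \<in> carc n s f" "y = rv n z" by blast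
    have zn: "z < n" and d: "dst n s z \<le> dst n s f" using z carc_mem[OF s f] by auto
    have "dst n z f \<le> dst n s f" using dst_swap[OF s f zn] d by simp
    then have "dst n (rv n f) (rv n z) \<le> dst n (rv n f) (rv n s)" using dst_rv[OF f zn] dst_rv[OF f s] by simp
    then show "y \<in> carc n (rv n f) (rv n s)" using carc_mem[OF rf] z rv_lt[OF zn] by simp
  qed
qed

lemma tr_set:
  assumes "s < n" "f < n"
  shows "carc n (rv n f) (rv n s) \<inter> {i. i < n \<and> Q (rv n i)} = rv n ` (carc n s f \<inter> {i. i < n \<and> Q i})"
proof -
  have sub: "carc n s f \<subseteq> {..<n}" using carc_mem[OF assms] by auto
  show ?thesis unfolding carc_rv[OF assms]
  proof (rule set_eqI)
    fix y
    show "y \<in> rv n ` carc n s f \<inter> {i. i < n \<and> Q (rv n i)} \<longleftrightarrow> y \<in> rv n ` (carc n s f \<inter> {i. i < n \<and> Q i})"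
    proof
      assume "y \<in> rv n ` carc n s f \<inter> {i. i < n \<and> Q (rv n i)}"
      then obtain z where z: "z \<in> carc n s f" "y = rv n z" "Q (rv n y)" by blast
      have "z < n" using z sub by auto
      then show "y \<in> rv n ` (carc n s f \<inter> {i. i < n \<and> Q i})" using z rv_rv by auto
    next
      assume "y \<in> rv n ` (carc n s f \<inter> {i. i < n \<and> Q i})"
      then obtain z where z: "z \<in> carc n s f" "z < n" "Q z" "y = rv n z" by blast
      then show "y \<in> rv n ` carc n s f \<inter> {i. i < n \<and> Q (rv n i)}" using rv_rv rv_lt by auto
    qed
  qed
qed

lemma tr_card:
  assumes "s < n" "f < n"
  shows "card (carc n (rv n f) (rv n s) \<inter> {i. i < n \<and> Q (rv n i)}) = card (carc n s f \<inter> {i. i < n \<and> Q i})"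
proof -
  have "inj_on (rv n) (carc n s f \<inter> {i. i < n \<and> Q i})" by (rule inj_on_subset[OF inj_rv]) auto
  then show ?thesis unfolding tr_set[OF assms] by (rule card_image)
qed

lemma tr_sum:
  assumes "s < n" "f < n"
  shows "sum (\<lambda>i. w (rv n i)) (carc n (rv n f) (rv n s) \<inter> {i. i < n \<and> Q (rv n i)}) = sum w (carc n s f \<inter> {i. i < n \<and> Q i})"
proof -
  have "inj_on (rv n) (carc n s f \<inter> {i. i < n \<and> Q i})" by (rule inj_on_subset[OF inj_rv]) auto
  then have "sum (\<lambda>i. w (rv n i)) (rv n ` (carc n s f \<inter> {i. i < n \<and> Q i}))
       = sum (\<lambda>i. w (rv n (rv n i))) (carc n s f \<inter> {i. i < n \<and> Q i})" by (simp add: sum.reindex)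
  also have "\<dots> = sum w (carc n s f \<inter> {i. i < n \<and> Q i})" by (rule sum.cong) (auto simp: rv_rv)
  finally show ?thesis unfolding tr_set[OF assms] .
qed

lemma rv_set: "{i. i < n \<and> Q (rv n i)} = rv n ` {i. i < n \<and> Q i}"
proof (rule set_eqI)
  fix y show "y \<in> {i. i < n \<and> Q (rv n i)} \<longleftrightarrow> y \<in> rv n ` {i. i < n \<and> Q i}"
    using rv_rv rv_lt by (metis (no_types, lifting) image_iff mem_Collect_eq)
qed

lemma rv_card: "card {i. i < n \<and> Q (rv n i)} = card {i. i < n \<and> Q i}"
proof -
  have "inj_on (rv n) {i. i < n \<and> Q i}" by (rule inj_on_subset[OF inj_rv]) auto
  then show ?thesis unfolding rv_set by (rule card_image)
qed

lemma rv_sum: "sum (\<lambda>i. w (rv n i)) {i. i < n \<and> Q (rv n i)} = sum w {i. i < n \<and> Q i}"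
proof -
  have "inj_on (rv n) {i. i < n \<and> Q i}" by (rule inj_on_subset[OF inj_rv]) auto
  then have "sum (\<lambda>i. w (rv n i)) (rv n ` {i. i < n \<and> Q i}) = sum (\<lambda>i. w (rv n (rv n i))) {i. i < n \<and> Q i}"
    by (simp add: sum.reindex)
  also have "\<dots> = sum w {i. i < n \<and> Q i}" by (rule sum.cong) (auto simp: rv_rv)
  finally show ?thesis unfolding rv_set .
qed



lemma minus_core:
  assumes w: "w \<in> CG0minus d1 d2 p q" and n: "0 < d1 + d2"
  shows "core (d1 + d2) (\<lambda>x. \<not> isN d1 d2 (rv (d1 + d2) x)) (\<lambda>x. w (rv (d1 + d2) x)) d2 d1
           (\<lambda>i. hh d1 d2 (d1 + d2 - i))"
proof
  let ?n = "d1 + d2"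
  let ?r = "rv ?n"
  show "0 < ?n" by (rule n)
  show "card {i. i < ?n \<and> \<not> isN d1 d2 (?r i)} = d1"
    using rv_card[of ?n "\<lambda>i. \<not> isN d1 d2 i"] by (simp add: ES_eq card_edgesE)
  show "card {i. i < ?n \<and> \<not> \<not> isN d1 d2 (?r i)} = d2"
    using rv_card[of ?n "\<lambda>i. isN d1 d2 i"] by (simp add: NS_eq card_edgesN)
  show "hh d1 d2 (?n - 0) = 0" using hhn by simp
  show "hh d1 d2 (?n - ?n) = 0" using hh0 by simp
  show "\<And>m. m < ?n \<Longrightarrow> hh d1 d2 (?n - Suc m) = hh d1 d2 (?n - m) + (if \<not> isN d1 d2 (?r m) then int d2 else - int d1)"
  proof -
    fix m assume m: "m < ?n"
    have "?n - m = Suc (?n - Suc m)" using m by simp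
    moreover have "?r m = ?n - Suc m" by (simp add: rv_def)
    ultimately show "hh d1 d2 (?n - Suc m) = hh d1 d2 (?n - m) + (if \<not> isN d1 d2 (?r m) then int d2 else - int d1)"
      using hh_step[of d1 d2 "?n - Suc m"] by simp
  qed
  show "\<And>m. m \<le> ?n \<Longrightarrow> - int (d2 + d1) < hh d1 d2 (?n - m) \<and> hh d1 d2 (?n - m) \<le> 0"
    using hh_gt[OF n] hh_le by (simp add: add.commute)
  have wd: "compatible d1 d2 w" "sum w (edgesE d1 d2 - shadowSet d1 d2 w (edgesN d1 d2)) = 0"
    using w by (auto simp: CG0minus_def)
  show "\<And>v'. v' < ?n \<Longrightarrow> \<not> isN d1 d2 (?r v') \<Longrightarrow> 0 < w (?r v') \<Longrightarrow> (\<exists>u0<?n. \<not> \<not> isN d1 d2 (?r u0) \<and> 0 < w (?r u0) \<and>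
      (\<forall>x<?n. \<not> isN d1 d2 (?r x) \<and> x \<noteq> v' \<and> x \<in> carc ?n u0 v' \<longrightarrow>
          card (carc ?n u0 x \<inter> {i. i < ?n \<and> \<not> isN d1 d2 (?r i)}) \<noteq>
          sum (\<lambda>x. w (?r x)) (carc ?n u0 x \<inter> {i. i < ?n \<and> \<not> \<not> isN d1 d2 (?r i)})))"
  proof -
    fix v' assume v': "v' < ?n" "\<not> isN d1 d2 (?r v')" "0 < w (?r v')"
    define v where "v = ?r v'"
    have vn: "v < ?n" and vv: "v' = ?r v" using v' rv_lt rv_rv unfolding v_def by auto
    have vE: "v \<in> edgesE d1 d2" using v' vn unfolding v_def by (simp add: edgesE_def)
    obtain e0 where e0N: "e0 \<in> edgesN d1 d2" and vs: "v \<in> shadow d1 d2 w e0"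
      using in_shadowSet[OF wd(2) _ vE] v' by (auto simp: edgesE_def v_def)
    have we0: "w e0 \<noteq> 0"
    proof
      assume "w e0 = 0"
      then have "shadow d1 d2 w e0 = {}" by (simp add: shadow_def)
      then show False using vs by simp
    qed
    have e0: "e0 < ?n" "isN d1 d2 e0" using e0N by (auto simp: edgesN_def)
    have e0E: "e0 \<notin> edgesE d1 d2" using e0 by (simp add: edgesE_def)
    define P where "P = (\<lambda>u. u \<in> edgesE d1 d2 \<and>
                   card (arc d1 d2 u e0 \<inter> edgesE d1 d2) = sum w (arc d1 d2 u e0 \<inter> edgesN d1 d2))"
    have sh: "v \<in> (if \<exists>u. P u then arc d1 d2 (arg_min (\<lambda>u. card (arc d1 d2 u e0)) P) e0 \<inter> edgesE d1 d2
                 else edgesE d1 d2)"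
    proof -
      have "shadow d1 d2 w e0 = (if \<exists>u. P u then arc d1 d2 (arg_min (\<lambda>u. card (arc d1 d2 u e0)) P) e0 \<inter> edgesE d1 d2
                 else edgesE d1 d2)"
        using we0 e0E unfolding shadow_def Let_def P_def by simp
      then show ?thesis using vs by simp
    qed
    have u0: "?r e0 < ?n" "\<not> \<not> isN d1 d2 (?r (?r e0))" "0 < w (?r (?r e0))"
      using e0 we0 rv_lt rv_rv by auto
    have "\<forall>x'<?n. \<not> isN d1 d2 (?r x') \<and> x' \<noteq> v' \<and> x' \<in> carc ?n (?r e0) v' \<longrightarrow>
          card (carc ?n (?r e0) x' \<inter> {i. i < ?n \<and> \<not> isN d1 d2 (?r i)}) \<noteq>
          sum (\<lambda>x. w (?r x)) (carc ?n (?r e0) x' \<inter> {i. i < ?n \<and> \<not> \<not> isN d1 d2 (?r i)})"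
    proof (intro allI impI notI)
      fix x' assume x': "x' < ?n" "\<not> isN d1 d2 (?r x') \<and> x' \<noteq> v' \<and> x' \<in> carc ?n (?r e0) v'"
        and bal: "card (carc ?n (?r e0) x' \<inter> {i. i < ?n \<and> \<not> isN d1 d2 (?r i)}) =
          sum (\<lambda>x. w (?r x)) (carc ?n (?r e0) x' \<inter> {i. i < ?n \<and> \<not> \<not> isN d1 d2 (?r i)})"
      define x where "x = ?r x'"
      have xn: "x < ?n" and xx: "x' = ?r x" using x' rv_lt rv_rv unfolding x_def by auto
      have xE: "x \<in> edgesE d1 d2" using x' xn unfolding x_def by (simp add: edgesE_def)
      have xv: "x \<noteq> v" using x' unfolding x_def v_def using rv_rv v'(1) by metis
      have "x' \<in> ?r ` carc ?n v e0" using x' carc_rv[OF vn e0(1)] vv by simp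
      then have xin: "x \<in> carc ?n v e0" using rv_rv carc_mem[OF vn e0(1)] unfolding x_def by auto
      have "card (carc ?n x e0 \<inter> {i. i < ?n \<and> \<not> isN d1 d2 i}) = sum w (carc ?n x e0 \<inter> {i. i < ?n \<and> \<not> \<not> isN d1 d2 i})"
        using bal tr_card[OF xn e0(1), of "\<lambda>i. \<not> isN d1 d2 i"] tr_sum[OF xn e0(1), of w "\<lambda>i. \<not> \<not> isN d1 d2 i"]
        unfolding xx by simp
      then have bal2: "card (arc d1 d2 x e0 \<inter> edgesE d1 d2) = sum w (arc d1 d2 x e0 \<inter> edgesN d1 d2)"
        using arc_carc[OF xn e0(1)] by (simp add: NS_eq ES_eq)
      have Px: "P x" unfolding P_def using xE bal2 by simp
      then have ex: "\<exists>u. P u" by blast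
      define m where "m = arg_min (\<lambda>u. card (arc d1 d2 u e0)) P"
      have Pm: "P m" and mle: "card (arc d1 d2 m e0) \<le> card (arc d1 d2 x e0)"
        using arg_min_nat_lemma[of P x "\<lambda>u. card (arc d1 d2 u e0)"] Px unfolding m_def by auto
      have mn: "m < ?n" using Pm by (simp add: P_def edgesE_def)
      have vm: "v \<in> carc ?n m e0" using sh ex mn e0 unfolding m_def[symmetric] by (simp add: arc_carc)
      have dmv: "dst ?n m v \<le> dst ?n m e0" using vm carc_mem[OF mn e0(1)] by simp
      have dve: "dst ?n v e0 = dst ?n m e0 - dst ?n m v" by (rule dst_end[OF mn vn e0(1) dmv])
      have dvx: "dst ?n v x \<le> dst ?n v e0" using xin carc_mem[OF vn e0(1)] by simp
      have dxe: "dst ?n x e0 = dst ?n v e0 - dst ?n v x" by (rule dst_end[OF vn xn e0(1) dvx])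
      have dvx0: "dst ?n v x \<noteq> 0"
      proof
        assume "dst ?n v x = 0"
        then have "x = (v + 0) mod ?n" using pt_dst[OF vn xn] by simp
        then show False using xv vn by simp
      qed
      have "card (arc d1 d2 m e0) = Suc (dst ?n m e0)" using arc_carc card_carc mn e0 by simp
      moreover have "card (arc d1 d2 x e0) = Suc (dst ?n x e0)" using arc_carc card_carc xn e0 by simp
      ultimately show False using mle dve dxe dvx0 dvx by simp
    qed
    then show "\<exists>u0<?n. \<not> \<not> isN d1 d2 (?r u0) \<and> 0 < w (?r u0) \<and>
      (\<forall>x<?n. \<not> isN d1 d2 (?r x) \<and> x \<noteq> v' \<and> x \<in> carc ?n u0 v' \<longrightarrow>
          card (carc ?n u0 x \<inter> {i. i < ?n \<and> \<not> isN d1 d2 (?r i)}) \<noteq>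
          sum (\<lambda>x. w (?r x)) (carc ?n u0 x \<inter> {i. i < ?n \<and> \<not> \<not> isN d1 d2 (?r i)}))"
      using u0 by blast
  qed
  show "\<And>u0' v'. u0' < ?n \<Longrightarrow> v' < ?n \<Longrightarrow> \<not> \<not> isN d1 d2 (?r u0') \<Longrightarrow> \<not> isN d1 d2 (?r v') \<Longrightarrow>
      0 < w (?r u0') * w (?r v') \<Longrightarrow>
      (\<exists>e\<in>carc ?n u0' v'.
         (\<not> isN d1 d2 (?r e) \<and> e \<noteq> v' \<and> card (carc ?n u0' e \<inter> {i. i < ?n \<and> \<not> isN d1 d2 (?r i)}) =
            sum (\<lambda>x. w (?r x)) (carc ?n u0' e \<inter> {i. i < ?n \<and> \<not> \<not> isN d1 d2 (?r i)}))
       \<or> (\<not> \<not> isN d1 d2 (?r e) \<and> e \<noteq> u0' \<and> card (carc ?n e v' \<inter> {i. i < ?n \<and> \<not> \<not> isN d1 d2 (?r i)}) =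
            sum (\<lambda>x. w (?r x)) (carc ?n e v' \<inter> {i. i < ?n \<and> \<not> isN d1 d2 (?r i)})))"
  proof -
    fix u0' v' assume a: "u0' < ?n" "v' < ?n" "\<not> \<not> isN d1 d2 (?r u0')" "\<not> isN d1 d2 (?r v')"
      "0 < w (?r u0') * w (?r v')"
    define u where "u = ?r v'"
    define v where "v = ?r u0'"
    have un: "u < ?n" and vn: "v < ?n" and uu: "v' = ?r u" and vv: "u0' = ?r v"
      using a rv_lt rv_rv unfolding u_def v_def by auto
    have "u \<in> edgesE d1 d2" "v \<in> edgesN d1 d2" using a un vn unfolding u_def v_def by (auto simp: edgesE_def edgesN_def)
    moreover have "0 < w u * w v" using a(5) unfolding u_def v_def by (simp add: mult.commute)
    ultimately obtain e where e: "e \<in> arc d1 d2 u v" and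
      alt: "(e \<in> edgesN d1 d2 - {v} \<and>
           card (arc d1 d2 u e \<inter> edgesN d1 d2) = sum w (arc d1 d2 u e \<inter> edgesE d1 d2))
      \<or> (e \<in> edgesE d1 d2 - {u} \<and>
           card (arc d1 d2 e v \<inter> edgesE d1 d2) = sum w (arc d1 d2 e v \<inter> edgesN d1 d2))"
      using wd(1) unfolding compatible_def by blast
    have e': "e \<in> carc ?n u v" using e un vn arc_carc by simp
    then have en: "e < ?n" using carc_mem[OF un vn] by simp
    have re: "?r e \<in> carc ?n u0' v'" unfolding uu vv carc_rv[OF un vn] using e' by simp
    have rre: "?r (?r e) = e" using rv_rv en by simp
    have A1: "arc d1 d2 u e = carc ?n u e" using arc_carc un en by blast
    have A2: "arc d1 d2 e v = carc ?n e v" using arc_carc vn en by blast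
    have eN: "e \<in> edgesN d1 d2 \<longleftrightarrow> isN d1 d2 e" using en by (simp add: edgesN_def)
    have eE: "e \<in> edgesE d1 d2 \<longleftrightarrow> \<not> isN d1 d2 e" using en by (simp add: edgesE_def)
    have ne1: "?r e \<noteq> u0'" if "e \<noteq> v" using that vv rv_rv en vn by metis
    have ne2: "?r e \<noteq> v'" if "e \<noteq> u" using that uu rv_rv en un by metis
    show "\<exists>e\<in>carc ?n u0' v'.
         (\<not> isN d1 d2 (?r e) \<and> e \<noteq> v' \<and> card (carc ?n u0' e \<inter> {i. i < ?n \<and> \<not> isN d1 d2 (?r i)}) =
            sum (\<lambda>x. w (?r x)) (carc ?n u0' e \<inter> {i. i < ?n \<and> \<not> \<not> isN d1 d2 (?r i)}))
       \<or> (\<not> \<not> isN d1 d2 (?r e) \<and> e \<noteq> u0' \<and> card (carc ?n e v' \<inter> {i. i < ?n \<and> \<not> \<not> isN d1 d2 (?r i)}) =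
            sum (\<lambda>x. w (?r x)) (carc ?n e v' \<inter> {i. i < ?n \<and> \<not> isN d1 d2 (?r i)}))"
    proof (rule bexI[OF _ re])
      from alt show "(\<not> isN d1 d2 (?r (?r e)) \<and> ?r e \<noteq> v' \<and> card (carc ?n u0' (?r e) \<inter> {i. i < ?n \<and> \<not> isN d1 d2 (?r i)}) =
            sum (\<lambda>x. w (?r x)) (carc ?n u0' (?r e) \<inter> {i. i < ?n \<and> \<not> \<not> isN d1 d2 (?r i)}))
       \<or> (\<not> \<not> isN d1 d2 (?r (?r e)) \<and> ?r e \<noteq> u0' \<and> card (carc ?n (?r e) v' \<inter> {i. i < ?n \<and> \<not> \<not> isN d1 d2 (?r i)}) =
            sum (\<lambda>x. w (?r x)) (carc ?n (?r e) v' \<inter> {i. i < ?n \<and> \<not> isN d1 d2 (?r i)}))"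
      proof
        assume h: "e \<in> edgesN d1 d2 - {v} \<and> card (arc d1 d2 u e \<inter> edgesN d1 d2) = sum w (arc d1 d2 u e \<inter> edgesE d1 d2)"
        have c1: "card (carc ?n (?r e) v' \<inter> {i. i < ?n \<and> \<not> \<not> isN d1 d2 (?r i)}) = card (arc d1 d2 u e \<inter> edgesN d1 d2)"
          unfolding uu A1 using tr_card[OF un en, of "\<lambda>i. \<not> \<not> isN d1 d2 i"] by (simp add: NS_eq)
        have c2: "sum (\<lambda>x. w (?r x)) (carc ?n (?r e) v' \<inter> {i. i < ?n \<and> \<not> isN d1 d2 (?r i)}) = sum w (arc d1 d2 u e \<inter> edgesE d1 d2)"
          unfolding uu A1 using tr_sum[OF un en, of w "\<lambda>i. \<not> isN d1 d2 i"] by (simp add: ES_eq)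
        show ?thesis using h c1 c2 rre eN ne1 by simp
      next
        assume h: "e \<in> edgesE d1 d2 - {u} \<and> card (arc d1 d2 e v \<inter> edgesE d1 d2) = sum w (arc d1 d2 e v \<inter> edgesN d1 d2)"
        have c1: "card (carc ?n u0' (?r e) \<inter> {i. i < ?n \<and> \<not> isN d1 d2 (?r i)}) = card (arc d1 d2 e v \<inter> edgesE d1 d2)"
          unfolding vv A2 using tr_card[OF en vn, of "\<lambda>i. \<not> isN d1 d2 i"] by (simp add: ES_eq)
        have c2: "sum (\<lambda>x. w (?r x)) (carc ?n u0' (?r e) \<inter> {i. i < ?n \<and> \<not> \<not> isN d1 d2 (?r i)}) = sum w (arc d1 d2 e v \<inter> edgesN d1 d2)"
          unfolding vv A2 using tr_sum[OF en vn, of w "\<lambda>i. \<not> \<not> isN d1 d2 i"] by (simp add: NS_eq)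
        show ?thesis using h c1 c2 rre eE ne2 by simp
      qed
    qed
  qed
qed



lemma n_pos_of:
  assumes "sum w (edgesN d1 d2) = p" "sum w (edgesE d1 d2) = q" "(p, q) \<noteq> (0, 0)"
  shows "0 < d1 + d2"
proof (rule ccontr)
  assume "\<not> 0 < d1 + d2"
  then have "edgesN d1 d2 = {}" "edgesE d1 d2 = {}" by (auto simp: edgesN_def edgesE_def)
  then show False using assms by simp
qed

theorem lemma5p18:
  fixes d1 d2 p q :: nat
  assumes "(p, q) \<noteq> (0, 0)"
  shows "(q * d1 \<le> p * d2 \<longrightarrow> CG0plus d1 d2 p q = {})
       \<and> (p * d2 \<le> q * d1 \<longrightarrow> CG0minus d1 d2 p q = {})"
proof (intro conjI impI)
  assume le: "q * d1 \<le> p * d2"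
  show "CG0plus d1 d2 p q = {}"
  proof (rule ccontr)
    assume "CG0plus d1 d2 p q \<noteq> {}"
    then obtain w where w: "w \<in> CG0plus d1 d2 p q" by blast
    have pq: "sum w (edgesN d1 d2) = p" "sum w (edgesE d1 d2) = q" using w by (auto simp: CG0plus_def)
    have n: "0 < d1 + d2" by (rule n_pos_of[OF pq assms])
    have "sum w {i. i < d1 + d2 \<and> isN d1 d2 i} * d2 < sum w {i. i < d1 + d2 \<and> \<not> isN d1 d2 i} * d1"
      using core.core_main[OF plus_core[OF w n]] pq assms by (simp add: NS_eq ES_eq)
    then have "p * d2 < q * d1" using pq by (simp add: NS_eq ES_eq)
    then show False using le by simp
  qed
next
  assume le: "p * d2 \<le> q * d1"
  show "CG0minus d1 d2 p q = {}"
  proof (rule ccontr)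
    assume "CG0minus d1 d2 p q \<noteq> {}"
    then obtain w where w: "w \<in> CG0minus d1 d2 p q" by blast
    have pq: "sum w (edgesN d1 d2) = p" "sum w (edgesE d1 d2) = q" using w by (auto simp: CG0minus_def)
    have n: "0 < d1 + d2" by (rule n_pos_of[OF pq assms])
    have s1: "sum (\<lambda>x. w (rv (d1 + d2) x)) {i. i < d1 + d2 \<and> \<not> isN d1 d2 (rv (d1 + d2) i)} = q"
      using rv_sum[of w "d1 + d2" "\<lambda>i. \<not> isN d1 d2 i"] pq by (simp add: ES_eq)
    have s2: "sum (\<lambda>x. w (rv (d1 + d2) x)) {i. i < d1 + d2 \<and> \<not> \<not> isN d1 d2 (rv (d1 + d2) i)} = p"
      using rv_sum[of w "d1 + d2" "\<lambda>i. \<not> \<not> isN d1 d2 i"] pq by (simp add: NS_eq)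
    have "(q, p) \<noteq> (0, 0)" using assms by auto
    then have "q * d1 < p * d2"
      using core.core_main[OF minus_core[OF w n], unfolded s1 s2] by blast
    then show False using le by simp
  qed
qed


end
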